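(* Let $(p_{nm})_{n,m\in\{0,1,2\}}$ be a probability distribution on $\mathbb{Z}_3\times\mathbb{Z}_3$ and define $L_1=p_{00}+p_{10}+p_{20}$, $L_2=p_{00}+p_{01}+p_{02}$, $L_3=p_{00}+p_{11}+p_{22}$, $L_4=p_{00}+p_{12}+p_{21}$. If $p_{00}>1/3$, then $L_{\max}:=\max\{L_1,L_2,L_3,L_4\}>1/2$.
   Context: The $p_{nm}$ are the Bell-diagonal probabilities of a two-qutrit state; $L_1,\dots,L_4$ are the weights associated with the four mutually unbiased bases (the four lines through the origin of $\mathbb{Z}_3\times\mathbb{Z}_3$). *)

theory Defs
  imports Complex_Main
begin

end

theory Submission
  imports Defs
begin

theorem lemma4:
  fixes p :: "nat \<Rightarrow> nat \<Rightarrow> real"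
  assumes nonneg: "\<And>n m. n \<in> {0..2} \<Longrightarrow> m \<in> {0..2} \<Longrightarrow> p n m \<ge> 0"
    and total: "(\<Sum>n\<in>{0..2}. \<Sum>m\<in>{0..2}. p n m) = 1"
    and big: "p 0 0 > 1/3"
  shows "Max {p 0 0 + p 1 0 + p 2 0, p 0 0 + p 0 1 + p 0 2,
              p 0 0 + p 1 1 + p 2 2, p 0 0 + p 1 2 + p 2 1} > 1/2"
proof -
  have s: "{0..2::nat} = {0,1,2}" by auto
  have t: "p 0 0 + p 0 1 + p 0 2 + p 1 0 + p 1 1 + p 1 2 + p 2 0 + p 2 1 + p 2 2 = 1"
    using total unfolding s by (simp add: algebra_simps)
  let ?S = "{p 0 0 + p 1 0 + p 2 0, p 0 0 + p 0 1 + p 0 2,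
              p 0 0 + p 1 1 + p 2 2, p 0 0 + p 1 2 + p 2 1}"
  have fin: "finite ?S" by simp
  have "\<exists>x\<in>?S. x > 1/2"
  proof (rule ccontr)
    assume "\<not> ?thesis"
    then have "p 0 0 + p 1 0 + p 2 0 \<le> 1/2" "p 0 0 + p 0 1 + p 0 2 \<le> 1/2"
      "p 0 0 + p 1 1 + p 2 2 \<le> 1/2" "p 0 0 + p 1 2 + p 2 1 \<le> 1/2" by auto
    then show False using t big by linarith
  qed
  then obtain x where "x \<in> ?S" "x > 1/2" by blast
  moreover have "x \<le> Max ?S" using fin \<open>x \<in> ?S\<close> by (rule Max_ge)
  ultimately show ?thesis by linarith
qed

end
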